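(* Let $m\ge 3$, $n=2m$, and let $D=(X,O)$ be a marginally coupled QS design with $n$ rows. Suppose $d_H(O)\ge m-2$ and the number of unordered pairs of distinct rows of $O$ at Hamming distance exactly $m-2$ is smaller than $m^2/2$. Then $$d_1(X)\le\left\lfloor\frac{(m+1)m}{3}\right\rfloor,\qquad d_2(X)\le\sqrt{\left\lfloor\frac{m^2(m+1)}{6}\right\rfloor}.$$
   Context: $X$ is a $2m\times m$ LHD (each column a permutation of $\{1,\ldots,2m\}$), $O$ is a $2m\times m$ sequence design (each row a permutation of $\{1,\ldots,m\}$). $D=(X,O)$ is marginally coupled if for every column $u$ of $O$, every component $c\in\{1,\ldots,m\}$ and every column $j$ of $X$, the multiset $\{\lfloor (X_{rj}-1)/m\rfloor: O_{ru}=c\}$ equals $\{0,1\}$. $d_q(X)=\min_{i<j}\{\sum_k|x_{ik}-x_{jk}|^q\}^{1/q}$; $d_H(O)$ is the minimum over distinct row pairs of the number of positions where the rows differ. *)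

theory Defs
  imports "HOL-Analysis.Analysis"
begin

text \<open>Designs are indexed from 0: rows r < n, columns k < m.
  X r k is the entry of the LHD X in row r, column k (values 1..n);
  S r u is the entry of the sequence design O (here S) in row r, column u (values 1..m).\<close>

definition is_LHD :: "nat \<Rightarrow> nat \<Rightarrow> (nat \<Rightarrow> nat \<Rightarrow> nat) \<Rightarrow> bool" where
  "is_LHD n p X \<longleftrightarrow> (\<forall>k<p. bij_betw (\<lambda>r. X r k) {..<n} {1..n})"

definition is_sequence_design :: "nat \<Rightarrow> nat \<Rightarrow> (nat \<Rightarrow> nat \<Rightarrow> nat) \<Rightarrow> bool" where
  "is_sequence_design n m S \<longleftrightarrow> (\<forall>r<n. bij_betw (\<lambda>u. S r u) {..<m} {1..m})"

definition marginally_coupled :: "nat \<Rightarrow> (nat \<Rightarrow> nat \<Rightarrow> nat) \<Rightarrow> (nat \<Rightarrow> nat \<Rightarrow> nat) \<Rightarrow> bool" where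
  "marginally_coupled m X S \<longleftrightarrow>
     is_LHD (2*m) m X \<and> is_sequence_design (2*m) m S \<and>
     (\<forall>u<m. \<forall>c\<in>{1..m}. \<forall>j<m.
        image_mset (\<lambda>r. (X r j - 1) div m) (mset_set {r. r < 2*m \<and> S r u = c}) = {#0, 1#})"

definition row_dist_q :: "real \<Rightarrow> nat \<Rightarrow> (nat \<Rightarrow> nat \<Rightarrow> nat) \<Rightarrow> nat \<Rightarrow> nat \<Rightarrow> real" where
  "row_dist_q q p X i j = (\<Sum>k<p. \<bar>real (X i k) - real (X j k)\<bar> powr q) powr (1/q)"

definition d_q :: "real \<Rightarrow> nat \<Rightarrow> nat \<Rightarrow> (nat \<Rightarrow> nat \<Rightarrow> nat) \<Rightarrow> real" where
  "d_q q n p X = Min {row_dist_q q p X i j | i j. i < j \<and> j < n}"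

definition hamming_rows :: "nat \<Rightarrow> (nat \<Rightarrow> nat \<Rightarrow> nat) \<Rightarrow> nat \<Rightarrow> nat \<Rightarrow> nat" where
  "hamming_rows m S i j = card {u. u < m \<and> S i u \<noteq> S j u}"

definition d_H :: "nat \<Rightarrow> nat \<Rightarrow> (nat \<Rightarrow> nat \<Rightarrow> nat) \<Rightarrow> nat" where
  "d_H n m S = Min {hamming_rows m S i j | i j. i < j \<and> j < n}"

definition num_pairs_at_dist :: "nat \<Rightarrow> nat \<Rightarrow> (nat \<Rightarrow> nat \<Rightarrow> nat) \<Rightarrow> nat \<Rightarrow> nat" where
  "num_pairs_at_dist n m S h = card {(i, j). i < j \<and> j < n \<and> hamming_rows m S i j = h}"

end

theory Submission
  imports Defs
begin


lemma sumA: "2 * (\<Sum>a\<in>{1..n}. real a) = real n * (real n + 1)"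
  by (induction n) (simp_all add: atLeastAtMostSuc_conv algebra_simps)

lemma sumA2: "6 * (\<Sum>a\<in>{1..n}. real a ^ 2) = real n * (real n + 1) * (2 * real n + 1)"
  by (induction n) (simp_all add: atLeastAtMostSuc_conv algebra_simps power2_eq_square)

lemma H1: "2 * (\<Sum>a\<in>{1..n}. \<bar>real a - real (Suc n)\<bar>) = real n * (real n + 1)"
proof -
  have "(\<Sum>a\<in>{1..n}. \<bar>real a - real (Suc n)\<bar>) = (\<Sum>a\<in>{1..n}. real (Suc n) - real a)"
    by (rule sum.cong) auto
  also have "\<dots> = real n * real (Suc n) - (\<Sum>a\<in>{1..n}. real a)"
    by (simp add: sum_subtractf)
  finally show ?thesis using sumA[of n] by (simp add: algebra_simps)
qed

lemma H2: "6 * (\<Sum>a\<in>{1..n}. (real a - real (Suc n))^2) = real n * (real n + 1) * (2 * real n + 1)"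
proof -
  have "(\<Sum>a\<in>{1..n}. (real a - real (Suc n))^2)
      = (\<Sum>a\<in>{1..n}. real a ^ 2) - 2 * real (Suc n) * (\<Sum>a\<in>{1..n}. real a) + real n * real (Suc n) ^ 2"
    by (simp add: power2_diff sum.distrib sum_subtractf sum_distrib_left algebra_simps)
  then show ?thesis using sumA[of n] sumA2[of n] by (simp add: algebra_simps power2_eq_square)
qed

lemma dsum_step:
  fixes f :: "nat \<Rightarrow> nat \<Rightarrow> real"
  assumes sym: "\<And>a b. f a b = f b a" and diag: "\<And>a. f a a = 0"
  shows "(\<Sum>a\<in>{1..Suc n}. \<Sum>b\<in>{1..Suc n}. f a b)
       = (\<Sum>a\<in>{1..n}. \<Sum>b\<in>{1..n}. f a b) + 2 * (\<Sum>a\<in>{1..n}. f a (Suc n))"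
proof -
  have i: "{1..Suc n} = insert (Suc n) {1..n}" by (simp add: atLeastAtMostSuc_conv)
  have "(\<Sum>a\<in>{1..Suc n}. \<Sum>b\<in>{1..Suc n}. f a b)
      = (\<Sum>b\<in>{1..n}. f (Suc n) b) + (\<Sum>a\<in>{1..n}. f a (Suc n) + (\<Sum>b\<in>{1..n}. f a b))"
    unfolding i by (simp add: diag)
  also have "\<dots> = (\<Sum>a\<in>{1..n}. \<Sum>b\<in>{1..n}. f a b) + 2 * (\<Sum>a\<in>{1..n}. f a (Suc n))"
    by (simp add: sum.distrib sym)
  finally show ?thesis .
qed

lemma S1: "3 * (\<Sum>a\<in>{1..n}. \<Sum>b\<in>{1..n}. \<bar>real a - real b\<bar>) = real n ^ 3 - real n"
proof (induction n)
  case 0 then show ?case by simp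
next
  case (Suc n)
  have "(\<Sum>a\<in>{1..Suc n}. \<Sum>b\<in>{1..Suc n}. \<bar>real a - real b\<bar>)
     = (\<Sum>a\<in>{1..n}. \<Sum>b\<in>{1..n}. \<bar>real a - real b\<bar>) + 2 * (\<Sum>a\<in>{1..n}. \<bar>real a - real (Suc n)\<bar>)"
    by (rule dsum_step) (simp_all add: abs_minus_commute)
  then show ?case using Suc.IH H1[of n] by (simp add: algebra_simps power3_eq_cube)
qed

lemma S2: "6 * (\<Sum>a\<in>{1..n}. \<Sum>b\<in>{1..n}. (real a - real b)^2) = real n ^ 4 - real n ^ 2"
proof (induction n)
  case 0 then show ?case by simp
next
  case (Suc n)
  have "(\<Sum>a\<in>{1..Suc n}. \<Sum>b\<in>{1..Suc n}. (real a - real b)^2)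
     = (\<Sum>a\<in>{1..n}. \<Sum>b\<in>{1..n}. (real a - real b)^2) + 2 * (\<Sum>a\<in>{1..n}. (real a - real (Suc n))^2)"
    by (rule dsum_step) (simp_all add: power2_commute)
  then show ?case using Suc.IH H2[of n] by (simp add: algebra_simps power2_eq_square power4_eq_xxxx)
qed



lemma rd1: "row_dist_q 1 p X i j = (\<Sum>k<p. \<bar>real (X i k) - real (X j k)\<bar>)"
  unfolding row_dist_q_def by (simp add: sum_nonneg)

lemma rd2: "row_dist_q 2 p X i j = sqrt (\<Sum>k<p. (real (X i k) - real (X j k))^2)"
  unfolding row_dist_q_def by (simp add: powr_half_sqrt sum_nonneg)

lemma nd: "real ((a - b) + (b - a)) = \<bar>real a - real (b::nat)\<bar>"
  by (cases "a \<le> b") (simp_all add: of_nat_diff)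

lemma minpair:
  fixes g :: "nat \<Rightarrow> nat \<Rightarrow> real"
  assumes n: "2 \<le> n" and sym: "\<And>i j. g i j = g j i"
  shows "(\<exists>i j. i < j \<and> j < n \<and> Min {g i j | i j. i < j \<and> j < n} = g i j)
       \<and> (\<forall>i<n. \<forall>j<n. i \<noteq> j \<longrightarrow> Min {g i j | i j. i < j \<and> j < n} \<le> g i j)"
proof -
  define V where "V = {g i j | i j. i < j \<and> j < n}"
  have "V \<subseteq> (\<lambda>(i,j). g i j) ` ({..<n}\<times>{..<n})" unfolding V_def by force
  then have fin: "finite V" by (rule finite_subset) simp
  have "g 0 1 \<in> V" unfolding V_def using n by force
  then have ne: "V \<noteq> {}" by blast
  have "Min V \<in> V" using fin ne by (rule Min_in)
  then have 1: "\<exists>i j. i < j \<and> j < n \<and> Min V = g i j" unfolding V_def by blast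
  have 2: "\<forall>i<n. \<forall>j<n. i \<noteq> j \<longrightarrow> Min V \<le> g i j"
  proof (intro allI impI)
    fix i j assume h: "i < n" "j < n" "i \<noteq> j"
    have "g (min i j) (max i j) \<in> V"
    proof -
      have "min i j < max i j \<and> max i j < n" using h by (auto simp: min_def max_def)
      then show ?thesis unfolding V_def by blast
    qed
    then have "Min V \<le> g (min i j) (max i j)" using fin by simp
    moreover have "g (min i j) (max i j) = g i j" using sym by (simp add: min_def max_def)
    ultimately show "Min V \<le> g i j" by simp
  qed
  show ?thesis using 1 2 unfolding V_def by blast
qed

lemma avg:
  fixes g :: "nat \<Rightarrow> nat \<Rightarrow> real"
  assumes fin: "finite T" and diag: "\<And>r. r \<in> T \<Longrightarrow> g r r = 0"
    and lb: "\<And>r r'. r \<in> T \<Longrightarrow> r' \<in> T \<Longrightarrow> r \<noteq> r' \<Longrightarrow> c \<le> g r r'"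
  shows "real (card T) * (real (card T) - 1) * c \<le> (\<Sum>r\<in>T. \<Sum>r'\<in>T. g r r')"
proof -
  have "\<And>r. r \<in> T \<Longrightarrow> (real (card T) - 1) * c \<le> (\<Sum>r'\<in>T. g r r')"
  proof -
    fix r assume r: "r \<in> T"
    have "(\<Sum>r'\<in>T. g r r') = g r r + (\<Sum>r'\<in>T-{r}. g r r')" using sum.remove[OF fin r] .
    also have "\<dots> = (\<Sum>r'\<in>T-{r}. g r r')" using diag[OF r] by simp
    also have "\<dots> \<ge> (\<Sum>r'\<in>T-{r}. c)" by (rule sum_mono) (use lb r in auto)
    finally have "(\<Sum>r'\<in>T-{r}. c) \<le> (\<Sum>r'\<in>T. g r r')" .
    moreover have "(\<Sum>r'\<in>T-{r}. c) = (real (card T) - 1) * c"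
    proof -
      have "card T > 0" using r fin card_gt_0_iff by blast
      then have "card T \<ge> 1" by simp
      then have "real (card (T - {r})) = real (card T) - 1" using r fin by (simp add: card_Diff_singleton of_nat_diff)
      then show ?thesis by simp
    qed
    ultimately show "(real (card T) - 1) * c \<le> (\<Sum>r'\<in>T. g r r')" by linarith
  qed
  then have "(\<Sum>r\<in>T. (real (card T) - 1) * c) \<le> (\<Sum>r\<in>T. \<Sum>r'\<in>T. g r r')" by (rule sum_mono)
  then show ?thesis by (simp add: mult.assoc)
qed



locale mcl =
  fixes m :: nat and X S :: "nat \<Rightarrow> nat \<Rightarrow> nat"
  assumes m3: "m \<ge> 3"
    and coupled: "marginally_coupled m X S"
    and dh: "d_H (2*m) m S \<ge> m - 2"
    and np: "real (num_pairs_at_dist (2*m) m S (m - 2)) < real m ^ 2 / 2"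
begin

definition lev :: "nat \<Rightarrow> nat \<Rightarrow> nat" where "lev r j = (X r j - 1) div m"
definition coll :: "nat \<Rightarrow> nat \<Rightarrow> nat" where "coll r r' = card {u. u < m \<and> S r u = S r' u}"

lemma lhd: "k < m \<Longrightarrow> bij_betw (\<lambda>r. X r k) {..<2*m} {1..2*m}"
  using coupled unfolding marginally_coupled_def is_LHD_def by blast

lemma sd: "r < 2*m \<Longrightarrow> bij_betw (S r) {..<m} {1..m}"
  using coupled unfolding marginally_coupled_def is_sequence_design_def by blast

lemma mc: "u < m \<Longrightarrow> c \<in> {1..m} \<Longrightarrow> j < m \<Longrightarrow>
   image_mset (\<lambda>r. lev r j) (mset_set {r. r < 2*m \<and> S r u = c}) = {#0, 1#}"
  using coupled unfolding marginally_coupled_def lev_def by blast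

lemma X_range: "r < 2*m \<Longrightarrow> k < m \<Longrightarrow> X r k \<in> {1..2*m}"
  using lhd[of k] by (auto simp: bij_betw_def)

lemma S_range: "r < 2*m \<Longrightarrow> u < m \<Longrightarrow> S r u \<in> {1..m}"
  using sd[of r] by (auto simp: bij_betw_def)

lemma lev01: "r < 2*m \<Longrightarrow> k < m \<Longrightarrow> lev r k = 0 \<or> lev r k = 1"
proof -
  assume a: "r < 2*m" "k < m"
  have "X r k - 1 < 2*m" using X_range[OF a] by auto
  then have "(X r k - 1) div m < 2" using m3 by (simp add: div_less_iff_less_mult)
  then show ?thesis unfolding lev_def by auto
qed

lemma lev0_iff: "r < 2*m \<Longrightarrow> k < m \<Longrightarrow> lev r k = 0 \<longleftrightarrow> X r k \<le> m"
proof -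
  assume a: "r < 2*m" "k < m"
  have "X r k \<ge> 1" using X_range[OF a] by simp
  moreover have "lev r k = 0 \<longleftrightarrow> X r k - 1 < m" unfolding lev_def using m3 by (simp add: div_eq_0_iff)
  ultimately show ?thesis by linarith
qed

lemma X_decomp: "r < 2*m \<Longrightarrow> k < m \<Longrightarrow> X r k = m * lev r k + ((X r k - 1) mod m + 1)"
proof -
  assume a: "r < 2*m" "k < m"
  have "X r k \<ge> 1" using X_range[OF a] by simp
  moreover have "m * lev r k + (X r k - 1) mod m = X r k - 1"
    unfolding lev_def using div_mult_mod_eq[of "X r k - 1" m] by (simp add: mult.commute)
  ultimately show ?thesis by linarith
qed

lemma card_lev0: "k < m \<Longrightarrow> card {r. r < 2*m \<and> lev r k = 0} = m"
proof -
  assume k: "k < m"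
  have e: "{r. r < 2*m \<and> lev r k = 0} = {r\<in>{..<2*m}. X r k \<in> {1..m}}"
    using lev0_iff[OF _ k] X_range[OF _ k] by auto
  have inj: "inj_on (\<lambda>r. X r k) {..<2*m}" using lhd[OF k] by (auto simp: bij_betw_def)
  have "(\<lambda>r. X r k) ` {r\<in>{..<2*m}. X r k \<in> {1..m}} = {1..m}"
  proof
    show "(\<lambda>r. X r k) ` {r\<in>{..<2*m}. X r k \<in> {1..m}} \<subseteq> {1..m}" by blast
    show "{1..m} \<subseteq> (\<lambda>r. X r k) ` {r\<in>{..<2*m}. X r k \<in> {1..m}}"
    proof
      fix v assume v: "v \<in> {1..m}"
      then have "v \<in> (\<lambda>r. X r k) ` {..<2*m}" using lhd[OF k] unfolding bij_betw_def by auto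
      then obtain r where "r \<in> {..<2*m}" "v = X r k" by blast
      then show "v \<in> (\<lambda>r. X r k) ` {r\<in>{..<2*m}. X r k \<in> {1..m}}" using v by blast
    qed
  qed
  moreover have "inj_on (\<lambda>r. X r k) {r\<in>{..<2*m}. X r k \<in> {1..m}}"
    using inj by (rule inj_on_subset) blast
  ultimately have "card {1..m} = card {r\<in>{..<2*m}. X r k \<in> {1..m}}"
    using card_image by metis
  then show ?thesis using e by simp
qed

lemma card_lev1: "k < m \<Longrightarrow> card {r. r < 2*m \<and> lev r k = 1} = m"
proof -
  assume k: "k < m"
  have h: "\<And>r. r<2*m \<Longrightarrow> lev r k \<noteq> 0 \<Longrightarrow> lev r k = 1" using lev01[OF _ k] by (metis)
  have "{r. r < 2*m \<and> lev r k = 1} = {..<2*m} - {r. r < 2*m \<and> lev r k = 0}"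
    using h by fastforce
  moreover have "card ({..<2*m} - {r. r < 2*m \<and> lev r k = 0}) = 2*m - m"
    by (subst card_Diff_subset) (auto simp: card_lev0[OF k])
  ultimately show ?thesis by simp
qed



lemma pair: assumes u: "u < m" and c: "c \<in> {1..m}"
  shows "\<exists>r r'. r \<noteq> r' \<and> {r. r < 2*m \<and> S r u = c} = {r, r'} \<and> (\<forall>j<m. lev r j \<noteq> lev r' j)"
proof -
  define M where "M = {r. r < 2*m \<and> S r u = c}"
  have fin: "finite M" unfolding M_def by simp
  have "size (image_mset (\<lambda>r. lev r 0) (mset_set M)) = 2"
    using mc[OF u c, of 0] m3 unfolding M_def by simp
  then have "card M = 2" by simp
  then obtain r r' where rr: "M = {r, r'}" "r \<noteq> r'" by (auto simp: card_2_iff)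
  have "\<forall>j<m. lev r j \<noteq> lev r' j"
  proof (intro allI impI)
    fix j assume j: "j < m"
    have "{#lev r j, lev r' j#} = {#0, 1#}"
      using mc[OF u c j] rr unfolding M_def by simp
    show "lev r j \<noteq> lev r' j"
    proof
      assume e: "lev r j = lev r' j"
      have "count {#lev r j, lev r' j#} (lev r j) = count {#0, 1#} (lev r j)"
        using \<open>{#lev r j, lev r' j#} = {#0, 1#}\<close> by simp
      then show False using e by (simp split: if_splits)
    qed
  qed
  then show ?thesis using rr unfolding M_def by blast
qed

lemma partner: assumes "r < 2*m" "r' < 2*m" "r \<noteq> r'" "u < m" "S r u = S r' u" "j < m"
  shows "lev r j \<noteq> lev r' j"
proof -
  have c: "S r u \<in> {1..m}" using S_range[OF assms(1) assms(4)] .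
  obtain a b where ab: "a \<noteq> b" "{s. s < 2*m \<and> S s u = S r u} = {a, b}" "\<forall>j<m. lev a j \<noteq> lev b j"
    using pair[OF assms(4) c] by blast
  have "r \<in> {a, b}" "r' \<in> {a, b}" using ab(2) assms(1,2,5) by auto
  then have "(r = a \<and> r' = b) \<or> (r = b \<and> r' = a)" using assms(3) by blast
  then show ?thesis using ab(3) assms(6) by auto
qed

lemma coll_sym: "coll i j = coll j i"
  unfolding coll_def by (rule arg_cong[where f=card]) auto

lemma hamming_coll: "hamming_rows m S i j + coll i j = m"
proof -
  have "{u. u < m \<and> S i u \<noteq> S j u} \<union> {u. u < m \<and> S i u = S j u} = {..<m}" by auto
  moreover have "card ({u. u < m \<and> S i u \<noteq> S j u} \<union> {u. u < m \<and> S i u = S j u})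
     = card {u. u < m \<and> S i u \<noteq> S j u} + card {u. u < m \<and> S i u = S j u}"
    by (rule card_Un_disjoint) auto
  ultimately show ?thesis unfolding hamming_rows_def coll_def by simp
qed

lemma hamming_sym: "hamming_rows m S i j = hamming_rows m S j i"
  using hamming_coll[of i j] hamming_coll[of j i] coll_sym[of i j] by simp

lemma finH: "finite {hamming_rows m S i j | i j. i < j \<and> j < 2*m}"
proof -
  have "{hamming_rows m S i j | i j. i < j \<and> j < 2*m} \<subseteq> (\<lambda>(i,j). hamming_rows m S i j) ` ({..<2*m} \<times> {..<2*m})"
    by force
  then show ?thesis by (rule finite_subset) simp
qed

lemma coll_le2: assumes "i < 2*m" "j < 2*m" "i \<noteq> j" shows "coll i j \<le> 2"
proof -
  have "hamming_rows m S (min i j) (max i j) \<in> {hamming_rows m S i j | i j. i < j \<and> j < 2*m}"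
  proof -
    have "min i j < max i j \<and> max i j < 2*m" using assms by (auto simp: min_def max_def)
    then show ?thesis by blast
  qed
  then have "d_H (2*m) m S \<le> hamming_rows m S (min i j) (max i j)"
    unfolding d_H_def using finH by (rule Min_le[rotated])
  moreover have "hamming_rows m S (min i j) (max i j) = hamming_rows m S i j"
    using hamming_sym by (simp add: min_def max_def)
  ultimately have "m - 2 \<le> hamming_rows m S i j" using dh by linarith
  then show ?thesis using hamming_coll[of i j] by linarith
qed

lemma coll_as_sum: "coll r r' = (\<Sum>u<m. if S r u = S r' u then 1 else 0)"
proof -
  have e: "{u. u < m \<and> S r u = S r' u} = {u\<in>{..<m}. S r u = S r' u}" by auto
  show ?thesis unfolding coll_def e card_eq_sum
    by (rule sum.inter_filter) simp
qed

lemma coll_sum: assumes r: "r < 2*m" shows "(\<Sum>r'\<in>{..<2*m}-{r}. coll r r') = m"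
proof -
  have "(\<Sum>r'\<in>{..<2*m}-{r}. coll r r') = (\<Sum>r'\<in>{..<2*m}-{r}. \<Sum>u<m. if S r u = S r' u then 1 else 0)"
    by (simp only: coll_as_sum)
  also have "\<dots> = (\<Sum>u<m. \<Sum>r'\<in>{..<2*m}-{r}. if S r u = S r' u then 1 else 0)"
    by (rule sum.swap)
  also have "\<dots> = (\<Sum>u<m. 1)"
  proof (rule sum.cong[OF refl])
    fix u assume u: "u \<in> {..<m}"
    have c: "S r u \<in> {1..m}" using S_range[OF r] u by simp
    obtain a b where ab: "a \<noteq> b" "{s. s < 2*m \<and> S s u = S r u} = {a, b}"
      using pair[of u "S r u"] u c by blast
    have "r \<in> {s. s < 2*m \<and> S s u = S r u}" using r by simp
    then have rab: "r \<in> {a,b}" by (simp only: ab(2))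
    have "{r'\<in>{..<2*m}-{r}. S r u = S r' u} = {s. s < 2*m \<and> S s u = S r u} - {r}" by auto
    then have "{r'\<in>{..<2*m}-{r}. S r u = S r' u} = {a,b} - {r}" by (simp only: ab(2))
    moreover have "card ({a,b} - {r}) = 1" using rab ab(1) by auto
    ultimately have cd: "card {r'\<in>{..<2*m}-{r}. S r u = S r' u} = 1" by simp
    have "(\<Sum>r'\<in>{..<2*m}-{r}. if S r u = S r' u then 1 else 0) = card {r'\<in>{..<2*m}-{r}. S r u = S r' u}"
      unfolding card_eq_sum by (rule sum.inter_filter[symmetric]) simp
    then show "(\<Sum>r'\<in>{..<2*m}-{r}. if S r u = S r' u then 1 else 0) = (1::nat)"
      using cd by simp
  qed
  finally show ?thesis by simp
qed


lemma coll_pos: assumes "0 < coll r r'" shows "\<exists>u<m. S r u = S r' u"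
proof -
  have "{u. u < m \<and> S r u = S r' u} \<noteq> {}" using assms unfolding coll_def by (metis card.empty less_irrefl)
  then show ?thesis by blast
qed

lemma opp: assumes "r < 2*m" "r' < 2*m" "r \<noteq> r'" "0 < coll r r'" "k < m"
  shows "lev r' k = 1 - lev r k"
proof -
  obtain u where u: "u < m" "S r u = S r' u" using coll_pos[OF assms(4)] by blast
  have "lev r k \<noteq> lev r' k" using partner[OF assms(1-3) u assms(5)] .
  then show ?thesis using lev01[OF assms(1,5)] lev01[OF assms(2,5)] by linarith
qed

lemma class_sum: assumes r: "r < 2*m" and F: "F \<subseteq> {..<2*m}" "r \<notin> F"
  and part: "\<And>r'. r' < 2*m \<Longrightarrow> r' \<noteq> r \<Longrightarrow> 0 < coll r r' \<Longrightarrow> r' \<in> F"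
  shows "(\<Sum>r'\<in>F. coll r r') = m"
proof -
  have "(\<Sum>r'\<in>{..<2*m}-{r}. coll r r') = (\<Sum>r'\<in>F. coll r r')"
  proof (rule sum.mono_neutral_right)
    show "finite ({..<2*m}-{r})" by simp
    show "F \<subseteq> {..<2*m}-{r}" using F by blast
    show "\<forall>i\<in>{..<2*m} - {r} - F. coll r i = 0" using part by blast
  qed
  then show ?thesis using coll_sum[OF r] by simp
qed

lemma sum_le2: assumes r: "r < 2*m" and F: "F \<subseteq> {..<2*m}" "r \<notin> F"
  shows "(\<Sum>r'\<in>F. coll r r') \<le> 2 * card F"
proof -
  have "(\<Sum>r'\<in>F. coll r r') \<le> (\<Sum>r'\<in>F. 2)"
  proof (rule sum_mono)
    fix r' assume "r' \<in> F"
    then show "coll r r' \<le> 2" using coll_le2[OF r] F by blast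
  qed
  then show ?thesis by simp
qed

lemma all2: assumes r: "r < 2*m" and F: "F \<subseteq> {..<2*m}" "r \<notin> F"
  and s: "(\<Sum>r'\<in>F. coll r r') = 2 * card F" and x: "x \<in> F"
  shows "coll r x = 2"
proof (rule ccontr)
  assume ne: "coll r x \<noteq> 2"
  have fin: "finite F" using F finite_subset by blast
  have le: "\<forall>r'\<in>F. coll r r' \<le> 2" using coll_le2[OF r] F by blast
  have "(\<Sum>r'\<in>F. coll r r') < (\<Sum>r'\<in>F. 2)"
    by (rule sum_strict_mono_ex1[OF fin]) (use le ne x in force)+
  then show False using s by simp
qed


lemma hamming_from_coll: "coll i j = 2 \<Longrightarrow> hamming_rows m S i j = m - 2"
  using hamming_coll[of i j] by linarith

lemma levs: assumes j: "j < m"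
  shows "(\<forall>r<2*m. lev r j = lev r 0) \<or> (\<forall>r<2*m. lev r j \<noteq> lev r 0)"
proof (rule ccontr)
  assume neg: "\<not> ?thesis"
  have m0: "0 < m" using m3 by simp
  define Z where "Z = {..<2*m}"
  define A where "A = {r\<in>Z. lev r 0 = 0 \<and> lev r j = 0}"
  define B where "B = {r\<in>Z. lev r 0 = 0 \<and> lev r j = 1}"
  define C where "C = {r\<in>Z. lev r 0 = 1 \<and> lev r j = 0}"
  define D where "D = {r\<in>Z. lev r 0 = 1 \<and> lev r j = 1}"
  have finZ: "finite Z" unfolding Z_def by simp
  have sub: "A \<subseteq> Z" "B \<subseteq> Z" "C \<subseteq> Z" "D \<subseteq> Z" unfolding A_def B_def C_def D_def by auto
  have fin: "finite A" "finite B" "finite C" "finite D" using sub finZ finite_subset by blast+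
  have l0: "\<And>r. r \<in> Z \<Longrightarrow> lev r 0 = 0 \<or> lev r 0 = 1" using lev01 m0 unfolding Z_def by blast
  have lj: "\<And>r. r \<in> Z \<Longrightarrow> lev r j = 0 \<or> lev r j = 1" using lev01 j unfolding Z_def by blast
  have e1: "{r. r < 2*m \<and> lev r 0 = 0} = A \<union> B"
  proof (rule set_eqI)
    fix r show "r \<in> {r. r < 2*m \<and> lev r 0 = 0} \<longleftrightarrow> r \<in> A \<union> B"
      using lj[of r] unfolding A_def B_def Z_def by auto
  qed
  have e2: "{r. r < 2*m \<and> lev r j = 0} = A \<union> C"
  proof (rule set_eqI)
    fix r show "r \<in> {r. r < 2*m \<and> lev r j = 0} \<longleftrightarrow> r \<in> A \<union> C"
      using l0[of r] unfolding A_def C_def Z_def by auto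
  qed
  have e3: "{r. r < 2*m \<and> lev r j = 1} = B \<union> D"
  proof (rule set_eqI)
    fix r show "r \<in> {r. r < 2*m \<and> lev r j = 1} \<longleftrightarrow> r \<in> B \<union> D"
      using l0[of r] unfolding B_def D_def Z_def by auto
  qed
  have dAB: "A \<inter> B = {}" unfolding A_def B_def by auto
  have dAC: "A \<inter> C = {}" unfolding A_def C_def by auto
  have dBD: "B \<inter> D = {}" unfolding B_def D_def by auto
  have cAB: "card A + card B = m"
    using card_lev0[OF m0] card_Un_disjoint[OF fin(1,2) dAB] unfolding e1 by simp
  have cAC: "card A + card C = m"
    using card_lev0[OF j] card_Un_disjoint[OF fin(1,3) dAC] unfolding e2 by simp
  have cBD: "card B + card D = m"
    using card_lev1[OF j] card_Un_disjoint[OF fin(2,4) dBD] unfolding e3 by simp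
  have pA: "\<And>r r'. r \<in> A \<Longrightarrow> r' < 2*m \<Longrightarrow> r' \<noteq> r \<Longrightarrow> 0 < coll r r' \<Longrightarrow> r' \<in> D"
  proof -
    fix r r' assume h: "r \<in> A" "r' < 2*m" "r' \<noteq> r" "0 < coll r r'"
    have r: "r < 2*m" using h(1) unfolding A_def Z_def by simp
    have "lev r' 0 = 1 - lev r 0" "lev r' j = 1 - lev r j" using opp[OF r h(2) h(3)[symmetric] h(4)] m0 j by auto
    then show "r' \<in> D" using h unfolding A_def D_def Z_def by simp
  qed
  have pD: "\<And>r r'. r \<in> D \<Longrightarrow> r' < 2*m \<Longrightarrow> r' \<noteq> r \<Longrightarrow> 0 < coll r r' \<Longrightarrow> r' \<in> A"
  proof -
    fix r r' assume h: "r \<in> D" "r' < 2*m" "r' \<noteq> r" "0 < coll r r'"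
    have r: "r < 2*m" using h(1) unfolding D_def Z_def by simp
    have "lev r' 0 = 1 - lev r 0" "lev r' j = 1 - lev r j" using opp[OF r h(2) h(3)[symmetric] h(4)] m0 j by auto
    then show "r' \<in> A" using h unfolding A_def D_def Z_def by simp
  qed
  have pB: "\<And>r r'. r \<in> B \<Longrightarrow> r' < 2*m \<Longrightarrow> r' \<noteq> r \<Longrightarrow> 0 < coll r r' \<Longrightarrow> r' \<in> C"
  proof -
    fix r r' assume h: "r \<in> B" "r' < 2*m" "r' \<noteq> r" "0 < coll r r'"
    have r: "r < 2*m" using h(1) unfolding B_def Z_def by simp
    have "lev r' 0 = 1 - lev r 0" "lev r' j = 1 - lev r j" using opp[OF r h(2) h(3)[symmetric] h(4)] m0 j by auto
    then show "r' \<in> C" using h unfolding B_def C_def Z_def by simp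
  qed
  have pC: "\<And>r r'. r \<in> C \<Longrightarrow> r' < 2*m \<Longrightarrow> r' \<noteq> r \<Longrightarrow> 0 < coll r r' \<Longrightarrow> r' \<in> B"
  proof -
    fix r r' assume h: "r \<in> C" "r' < 2*m" "r' \<noteq> r" "0 < coll r r'"
    have r: "r < 2*m" using h(1) unfolding C_def Z_def by simp
    have "lev r' 0 = 1 - lev r 0" "lev r' j = 1 - lev r j" using opp[OF r h(2) h(3)[symmetric] h(4)] m0 j by auto
    then show "r' \<in> B" using h unfolding B_def C_def Z_def by simp
  qed
  have disj: "A \<inter> D = {}" "B \<inter> C = {}" unfolding A_def B_def C_def D_def by auto
  have sumA: "\<And>r. r \<in> A \<Longrightarrow> (\<Sum>r'\<in>D. coll r r') = m \<and> m \<le> 2 * card D"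
  proof -
    fix r assume h: "r \<in> A"
    have r: "r < 2*m" using h sub unfolding Z_def by auto
    have nr: "r \<notin> D" using h disj by auto
    have sY: "D \<subseteq> {..<2*m}" using sub unfolding Z_def by simp
    have "(\<Sum>r'\<in>D. coll r r') = m" by (rule class_sum[OF r sY nr pA[OF h]])
    moreover have "(\<Sum>r'\<in>D. coll r r') \<le> 2 * card D" by (rule sum_le2[OF r sY nr])
    ultimately show "(\<Sum>r'\<in>D. coll r r') = m \<and> m \<le> 2 * card D" by simp
  qed
  have sumD: "\<And>r. r \<in> D \<Longrightarrow> (\<Sum>r'\<in>A. coll r r') = m \<and> m \<le> 2 * card A"
  proof -
    fix r assume h: "r \<in> D"
    have r: "r < 2*m" using h sub unfolding Z_def by auto
    have nr: "r \<notin> A" using h disj by auto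
    have sY: "A \<subseteq> {..<2*m}" using sub unfolding Z_def by simp
    have "(\<Sum>r'\<in>A. coll r r') = m" by (rule class_sum[OF r sY nr pD[OF h]])
    moreover have "(\<Sum>r'\<in>A. coll r r') \<le> 2 * card A" by (rule sum_le2[OF r sY nr])
    ultimately show "(\<Sum>r'\<in>A. coll r r') = m \<and> m \<le> 2 * card A" by simp
  qed
  have sumB: "\<And>r. r \<in> B \<Longrightarrow> (\<Sum>r'\<in>C. coll r r') = m \<and> m \<le> 2 * card C"
  proof -
    fix r assume h: "r \<in> B"
    have r: "r < 2*m" using h sub unfolding Z_def by auto
    have nr: "r \<notin> C" using h disj by auto
    have sY: "C \<subseteq> {..<2*m}" using sub unfolding Z_def by simp
    have "(\<Sum>r'\<in>C. coll r r') = m" by (rule class_sum[OF r sY nr pB[OF h]])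
    moreover have "(\<Sum>r'\<in>C. coll r r') \<le> 2 * card C" by (rule sum_le2[OF r sY nr])
    ultimately show "(\<Sum>r'\<in>C. coll r r') = m \<and> m \<le> 2 * card C" by simp
  qed
  have sumC: "\<And>r. r \<in> C \<Longrightarrow> (\<Sum>r'\<in>B. coll r r') = m \<and> m \<le> 2 * card B"
  proof -
    fix r assume h: "r \<in> C"
    have r: "r < 2*m" using h sub unfolding Z_def by auto
    have nr: "r \<notin> B" using h disj by auto
    have sY: "B \<subseteq> {..<2*m}" using sub unfolding Z_def by simp
    have "(\<Sum>r'\<in>B. coll r r') = m" by (rule class_sum[OF r sY nr pC[OF h]])
    moreover have "(\<Sum>r'\<in>B. coll r r') \<le> 2 * card B" by (rule sum_le2[OF r sY nr])
    ultimately show "(\<Sum>r'\<in>B. coll r r') = m \<and> m \<le> 2 * card B" by simp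
  qed
  obtain r1 where r1: "r1 < 2*m" "lev r1 j \<noteq> lev r1 0" using neg by blast
  obtain r2 where r2: "r2 < 2*m" "lev r2 j = lev r2 0" using neg by blast
  have cCB: "card C = card B" "card D = card A" using cAB cAC cBD by linarith+
  have "r1 \<in> Z" unfolding Z_def using r1 by simp
  then have "r1 \<in> B \<or> r1 \<in> C" using l0[of r1] lj[of r1] r1(2) unfolding B_def C_def by auto
  then have "m \<le> 2 * card B"
  proof
    assume "r1 \<in> B" then show ?thesis using sumB[of r1] cCB by simp
  next
    assume "r1 \<in> C" then show ?thesis using sumC[of r1] by simp
  qed
  have "r2 \<in> Z" unfolding Z_def using r2 by simp
  then have "r2 \<in> A \<or> r2 \<in> D" using l0[of r2] lj[of r2] r2(2) unfolding A_def D_def by auto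
  then have "m \<le> 2 * card A"
  proof
    assume "r2 \<in> A" then show ?thesis using sumA[of r2] cCB by simp
  next
    assume "r2 \<in> D" then show ?thesis using sumD[of r2] by simp
  qed
  have eqA: "2 * card A = m" "2 * card B = m" "card D = card A" "card C = card B"
    using \<open>m \<le> 2 * card A\<close> \<open>m \<le> 2 * card B\<close> cAB cAC cBD by linarith+
  have hAD: "\<And>a d. a \<in> A \<Longrightarrow> d \<in> D \<Longrightarrow> hamming_rows m S a d = m - 2"
  proof -
    fix a d assume ad: "a \<in> A" "d \<in> D"
    have a: "a < 2*m" using ad unfolding A_def Z_def by simp
    have "a \<notin> D" using ad disj by blast
    then have "coll a d = 2" using all2[OF a _ _ _ ad(2)] conjunct1[OF sumA[OF ad(1)]] eqA sub unfolding Z_def by simp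
    then show "hamming_rows m S a d = m - 2" by (rule hamming_from_coll)
  qed
  have hBC: "\<And>a d. a \<in> B \<Longrightarrow> d \<in> C \<Longrightarrow> hamming_rows m S a d = m - 2"
  proof -
    fix a d assume ad: "a \<in> B" "d \<in> C"
    have a: "a < 2*m" using ad unfolding B_def Z_def by simp
    have "a \<notin> C" using ad disj by blast
    then have "coll a d = 2" using all2[OF a _ _ _ ad(2)] conjunct1[OF sumB[OF ad(1)]] eqA sub unfolding Z_def by simp
    then show "hamming_rows m S a d = m - 2" by (rule hamming_from_coll)
  qed
  define P where "P = {(i, j). i < j \<and> j < 2*m \<and> hamming_rows m S i j = m - 2}"
  define f where "f = (\<lambda>(a::nat, b::nat). (min a b, max a b))"
  define U where "U = A \<times> D \<union> B \<times> C"
  have lev0U: "\<And>a b. (a, b) \<in> U \<Longrightarrow> lev a 0 = 0 \<and> lev b 0 = 1 \<and> a < 2*m \<and> b < 2*m"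
    unfolding U_def A_def B_def C_def D_def Z_def by auto
  have "f ` U \<subseteq> P"
  proof
    fix x assume "x \<in> f ` U"
    then obtain a b where ab: "(a, b) \<in> U" "x = f (a, b)" by auto
    have ne: "a \<noteq> b" using lev0U[OF ab(1)] by auto
    have h: "hamming_rows m S a b = m - 2" using ab(1) hAD hBC unfolding U_def by blast
    have "hamming_rows m S (min a b) (max a b) = m - 2"
      using h hamming_sym[of a b] by (cases "a \<le> b") (auto simp: min_def max_def)
    then show "x \<in> P" using ab lev0U[OF ab(1)] ne unfolding P_def f_def by (auto simp: min_def max_def)
  qed
  moreover have "inj_on f U"
  proof
    fix x y assume xy: "x \<in> U" "y \<in> U" "f x = f y"
    obtain a b where x: "x = (a, b)" by fastforce
    obtain c d where y: "y = (c, d)" by fastforce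
    have la: "lev a 0 = 0 \<and> lev b 0 = 1" "lev c 0 = 0 \<and> lev d 0 = 1"
      using lev0U xy(1,2) x y by blast+
    have "min a b = min c d" "max a b = max c d" using xy(3) x y unfolding f_def by auto
    then have "(a = c \<and> b = d) \<or> (a = d \<and> b = c)" by (auto simp: min_def max_def split: if_splits)
    then show "x = y" using la x y by auto
  qed
  moreover have "finite P"
    by (rule finite_subset[of _ "{..<2*m} \<times> {..<2*m}"]) (auto simp: P_def)
  ultimately have "card U \<le> card P" using card_inj_on_le by blast
  moreover have "card U = card A * card D + card B * card C"
    unfolding U_def using fin disj dAB by (subst card_Un_disjoint) (auto simp: card_cartesian_product)
  ultimately have "card A * card A + card B * card B \<le> num_pairs_at_dist (2*m) m S (m - 2)"
    unfolding num_pairs_at_dist_def P_def using eqA by simp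
  then have "real (card A * card A + card B * card B) \<le> real (num_pairs_at_dist (2*m) m S (m - 2))"
    by linarith
  moreover have "real (card A * card A + card B * card B) = real m ^ 2 / 2"
  proof -
    have "real m = 2 * real (card A)" "real m = 2 * real (card B)" using eqA by linarith+
    then show ?thesis by (simp add: power2_eq_square)
  qed
  ultimately show False using np by linarith
qed

end


context mcl begin

definition TT where "TT = {r. r < 2*m \<and> lev r 0 = 0}"
definition Y where "Y r j = (X r j - 1) mod m + 1"

lemma m0: "0 < m" using m3 by simp

lemma TT_card: "card TT = m" unfolding TT_def using card_lev0[OF m0] .
lemma TT_fin: "finite TT" unfolding TT_def by simp
lemma TT_lt: "r \<in> TT \<Longrightarrow> r < 2*m" unfolding TT_def by simp

lemma levsame: assumes j: "j < m" and r: "r \<in> TT" "r' \<in> TT" shows "lev r j = lev r' j"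
proof -
  have a: "r < 2*m" "lev r 0 = 0" "r' < 2*m" "lev r' 0 = 0" using r unfolding TT_def by auto
  show ?thesis using levs[OF j]
  proof
    assume "\<forall>r<2*m. lev r j = lev r 0" then show ?thesis using a by simp
  next
    assume h: "\<forall>r<2*m. lev r j \<noteq> lev r 0"
    then have "lev r j = 1" "lev r' j = 1" using a lev01[OF a(1) j] lev01[OF a(3) j] by auto
    then show ?thesis by simp
  qed
qed

lemma XY: assumes "r < 2*m" "j < m" shows "real (X r j) = real m * real (lev r j) + real (Y r j)"
proof -
  have "X r j = m * lev r j + Y r j" unfolding Y_def using X_decomp[OF assms] .
  then show ?thesis by (metis of_nat_add of_nat_mult)
qed

lemma absY: assumes j: "j < m" and r: "r \<in> TT" "r' \<in> TT"
  shows "real (X r j) - real (X r' j) = real (Y r j) - real (Y r' j)"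
  using XY[OF TT_lt[OF r(1)] j] XY[OF TT_lt[OF r(2)] j] levsame[OF j r] by simp

lemma bijY: assumes j: "j < m" shows "bij_betw (\<lambda>r. Y r j) TT {1..m}"
proof -
  have inj: "inj_on (\<lambda>r. Y r j) TT"
  proof
    fix r r' assume h: "r \<in> TT" "r' \<in> TT" "Y r j = Y r' j"
    have "real (X r j) = real (X r' j)" using absY[OF j h(1,2)] h(3) by simp
    then have "X r j = X r' j" by simp
    moreover have "inj_on (\<lambda>r. X r j) {..<2*m}" using lhd[OF j] by (simp add: bij_betw_def)
    ultimately show "r = r'" using TT_lt h(1,2) by (auto dest: inj_onD)
  qed
  have sub: "(\<lambda>r. Y r j) ` TT \<subseteq> {1..m}"
  proof
    fix y assume "y \<in> (\<lambda>r. Y r j) ` TT"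
    then obtain r where "y = Y r j" by blast
    moreover have "(X r j - 1) mod m < m" using m0 by simp
    ultimately show "y \<in> {1..m}" unfolding Y_def by simp
  qed
  have "card ((\<lambda>r. Y r j) ` TT) = card {1..m}" using card_image[OF inj] TT_card by simp
  then have "(\<lambda>r. Y r j) ` TT = {1..m}" using sub by (intro card_subset_eq) simp_all
  then show ?thesis using inj by (simp add: bij_betw_def)
qed

lemma sumTT:
  fixes g :: "nat \<Rightarrow> nat \<Rightarrow> real"
  assumes j: "j < m"
  shows "(\<Sum>r\<in>TT. \<Sum>r'\<in>TT. g (Y r j) (Y r' j)) = (\<Sum>a\<in>{1..m}. \<Sum>b\<in>{1..m}. g a b)"
proof -
  have "(\<Sum>r\<in>TT. \<Sum>r'\<in>TT. g (Y r j) (Y r' j)) = (\<Sum>r\<in>TT. \<Sum>b\<in>{1..m}. g (Y r j) b)"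
    by (rule sum.cong[OF refl]) (rule sum.reindex_bij_betw[OF bijY[OF j]])
  also have "\<dots> = (\<Sum>a\<in>{1..m}. \<Sum>b\<in>{1..m}. g a b)"
    by (rule sum.reindex_bij_betw[OF bijY[OF j], where g = "\<lambda>a. \<Sum>b\<in>{1..m}. g a b"])
  finally show ?thesis .
qed

lemma swap3:
  fixes f :: "nat \<Rightarrow> nat \<Rightarrow> nat \<Rightarrow> real"
  shows "(\<Sum>r\<in>TT. \<Sum>r'\<in>TT. \<Sum>k<m. f r r' k) = (\<Sum>k<m. \<Sum>r\<in>TT. \<Sum>r'\<in>TT. f r r' k)"
proof -
  have "(\<Sum>r\<in>TT. \<Sum>r'\<in>TT. \<Sum>k<m. f r r' k) = (\<Sum>r\<in>TT. \<Sum>k<m. \<Sum>r'\<in>TT. f r r' k)"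
    by (rule sum.cong[OF refl]) (rule sum.swap)
  also have "\<dots> = (\<Sum>k<m. \<Sum>r\<in>TT. \<Sum>r'\<in>TT. f r r' k)" by (rule sum.swap)
  finally show ?thesis .
qed

lemma tot1: "3 * (\<Sum>r\<in>TT. \<Sum>r'\<in>TT. \<Sum>k<m. \<bar>real (X r k) - real (X r' k)\<bar>) = real m * (real m ^ 3 - real m)"
proof -
  have "(\<Sum>r\<in>TT. \<Sum>r'\<in>TT. \<Sum>k<m. \<bar>real (X r k) - real (X r' k)\<bar>)
     = (\<Sum>k<m. \<Sum>r\<in>TT. \<Sum>r'\<in>TT. \<bar>real (X r k) - real (X r' k)\<bar>)" by (rule swap3)
  also have "\<dots> = (\<Sum>k<m. (real m ^ 3 - real m) / 3)"
  proof (rule sum.cong[OF refl])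
    fix k assume k: "k \<in> {..<m}"
    have "(\<Sum>r\<in>TT. \<Sum>r'\<in>TT. \<bar>real (X r k) - real (X r' k)\<bar>) = (\<Sum>r\<in>TT. \<Sum>r'\<in>TT. \<bar>real (Y r k) - real (Y r' k)\<bar>)"
      using absY k by (intro sum.cong refl) simp
    also have "\<dots> = (\<Sum>a\<in>{1..m}. \<Sum>b\<in>{1..m}. \<bar>real a - real b\<bar>)"
      using sumTT[of k "\<lambda>a b. \<bar>real a - real b\<bar>"] k by simp
    finally show "(\<Sum>r\<in>TT. \<Sum>r'\<in>TT. \<bar>real (X r k) - real (X r' k)\<bar>) = (real m ^ 3 - real m) / 3"
      using S1[of m] by simp
  qed
  finally show ?thesis by simp
qed

lemma tot2: "6 * (\<Sum>r\<in>TT. \<Sum>r'\<in>TT. \<Sum>k<m. (real (X r k) - real (X r' k))^2) = real m * (real m ^ 4 - real m ^ 2)"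
proof -
  have "(\<Sum>r\<in>TT. \<Sum>r'\<in>TT. \<Sum>k<m. (real (X r k) - real (X r' k))^2)
     = (\<Sum>k<m. \<Sum>r\<in>TT. \<Sum>r'\<in>TT. (real (X r k) - real (X r' k))^2)" by (rule swap3)
  also have "\<dots> = (\<Sum>k<m. (real m ^ 4 - real m ^ 2) / 6)"
  proof (rule sum.cong[OF refl])
    fix k assume k: "k \<in> {..<m}"
    have "(\<Sum>r\<in>TT. \<Sum>r'\<in>TT. (real (X r k) - real (X r' k))^2) = (\<Sum>r\<in>TT. \<Sum>r'\<in>TT. (real (Y r k) - real (Y r' k))^2)"
      using absY k by (intro sum.cong refl) simp
    also have "\<dots> = (\<Sum>a\<in>{1..m}. \<Sum>b\<in>{1..m}. (real a - real b)^2)"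
      using sumTT[of k "\<lambda>a b. (real a - real b)^2"] k by simp
    finally show "(\<Sum>r\<in>TT. \<Sum>r'\<in>TT. (real (X r k) - real (X r' k))^2) = (real m ^ 4 - real m ^ 2) / 6"
      using S2[of m] by simp
  qed
  finally show ?thesis by simp
qed


lemma main1: "d_q 1 (2*m) m X \<le> real (((m + 1) * m) div 3)"
proof -
  define g where "g = (\<lambda>i j. row_dist_q 1 m X i j)"
  have gsym: "\<And>i j. g i j = g j i" unfolding g_def rd1 by (rule sum.cong[OF refl]) (rule abs_minus_commute)
  have two: "2 \<le> 2*m" using m3 by simp
  note mp = minpair[OF two gsym]
  have dq: "d_q 1 (2*m) m X = Min {g i j | i j. i < j \<and> j < 2*m}" unfolding d_q_def g_def by (rule refl)
  from conjunct1[OF mp] obtain i0 where "\<exists>j0. i0 < j0 \<and> j0 < 2*m \<and> Min {g i j | i j. i < j \<and> j < 2*m} = g i0 j0" ..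
  then obtain j0 where ij0c: "i0 < j0 \<and> j0 < 2*m \<and> Min {g i j | i j. i < j \<and> j < 2*m} = g i0 j0" ..
  have ij0: "i0 < j0" "j0 < 2*m" "Min {g i j | i j. i < j \<and> j < 2*m} = g i0 j0" using ij0c by simp_all
  have ij: "i0 < j0" "j0 < 2*m" "d_q 1 (2*m) m X = g i0 j0" using ij0 dq by simp_all
  have le: "\<And>r r'. r \<in> TT \<Longrightarrow> r' \<in> TT \<Longrightarrow> r \<noteq> r' \<Longrightarrow> g i0 j0 \<le> (\<Sum>k<m. \<bar>real (X r k) - real (X r' k)\<bar>)"
  proof -
    fix r r' assume h: "r \<in> TT" "r' \<in> TT" "r \<noteq> r'"
    have "Min {g i j | i j. i < j \<and> j < 2*m} \<le> g r r'"
      by (rule conjunct2[OF mp, rule_format, OF TT_lt[OF h(1)] TT_lt[OF h(2)] h(3)])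
    then have "g i0 j0 \<le> g r r'" using ij0(3) by simp
    then show "g i0 j0 \<le> (\<Sum>k<m. \<bar>real (X r k) - real (X r' k)\<bar>)" unfolding g_def rd1 .
  qed
  have "real (card TT) * (real (card TT) - 1) * g i0 j0 \<le> (\<Sum>r\<in>TT. \<Sum>r'\<in>TT. \<Sum>k<m. \<bar>real (X r k) - real (X r' k)\<bar>)"
    by (rule avg[OF TT_fin]) (use le in auto)
  then have "3 * (real m * (real m - 1) * g i0 j0) \<le> real m * (real m ^ 3 - real m)"
    using tot1 TT_card by simp
  moreover have "real m * (real m ^ 3 - real m) = (real m * (real m - 1)) * (real m * (real m + 1))"
    by (simp add: algebra_simps power3_eq_cube)
  moreover have "(real m * (real m - 1)) * (3 * g i0 j0) = 3 * (real m * (real m - 1) * g i0 j0)" by simp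
  ultimately have "(real m * (real m - 1)) * (3 * g i0 j0) \<le> (real m * (real m - 1)) * (real m * (real m + 1))"
    by linarith
  moreover have "0 < real m * (real m - 1)" using m3 by simp
  ultimately have b: "3 * g i0 j0 \<le> real m * (real m + 1)" by (rule mult_le_cancel_left_pos[THEN iffD1, rotated])
  define N where "N = (\<Sum>k<m. (X i0 k - X j0 k) + (X j0 k - X i0 k))"
  have gN: "g i0 j0 = real N" unfolding g_def rd1 N_def by (simp only: of_nat_sum nd)
  have "real (3 * N) \<le> real ((m + 1) * m)" using b gN by (simp add: algebra_simps)
  then have "3 * N \<le> (m + 1) * m" by linarith
  then have "N \<le> ((m + 1) * m) div 3" by (simp add: less_eq_div_iff_mult_less_eq mult.commute)
  then show ?thesis using ij(3) gN by simp
qed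

lemma main2: "d_q 2 (2*m) m X \<le> sqrt (real ((m^2 * (m + 1)) div 6))"
proof -
  define Q where "Q = (\<lambda>i j. (\<Sum>k<m. (real (X i k) - real (X j k))^2))"
  define g where "g = (\<lambda>i j. row_dist_q 2 m X i j)"
  have gQ: "\<And>i j. g i j = sqrt (Q i j)" unfolding g_def Q_def rd2 by (rule refl)
  have Qsym: "\<And>i j. Q i j = Q j i" unfolding Q_def by (simp add: power2_commute)
  have gsym: "\<And>i j. g i j = g j i" using gQ Qsym by simp
  have two: "2 \<le> 2*m" using m3 by simp
  note mp = minpair[OF two gsym]
  have dq: "d_q 2 (2*m) m X = Min {g i j | i j. i < j \<and> j < 2*m}" unfolding d_q_def g_def by (rule refl)
  from conjunct1[OF mp] obtain i0 where "\<exists>j0. i0 < j0 \<and> j0 < 2*m \<and> Min {g i j | i j. i < j \<and> j < 2*m} = g i0 j0" ..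
  then obtain j0 where ij0c: "i0 < j0 \<and> j0 < 2*m \<and> Min {g i j | i j. i < j \<and> j < 2*m} = g i0 j0" ..
  have ij0: "i0 < j0" "j0 < 2*m" "Min {g i j | i j. i < j \<and> j < 2*m} = g i0 j0" using ij0c by simp_all
  have ij: "i0 < j0" "j0 < 2*m" "d_q 2 (2*m) m X = g i0 j0" using ij0 dq by simp_all
  have le: "\<And>r r'. r \<in> TT \<Longrightarrow> r' \<in> TT \<Longrightarrow> r \<noteq> r' \<Longrightarrow> Q i0 j0 \<le> Q r r'"
  proof -
    fix r r' assume h: "r \<in> TT" "r' \<in> TT" "r \<noteq> r'"
    have "Min {g i j | i j. i < j \<and> j < 2*m} \<le> g r r'"
      by (rule conjunct2[OF mp, rule_format, OF TT_lt[OF h(1)] TT_lt[OF h(2)] h(3)])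
    then have "g i0 j0 \<le> g r r'" using ij0(3) by simp
    then show "Q i0 j0 \<le> Q r r'" unfolding gQ by simp
  qed
  have "real (card TT) * (real (card TT) - 1) * Q i0 j0 \<le> (\<Sum>r\<in>TT. \<Sum>r'\<in>TT. Q r r')"
    by (rule avg[OF TT_fin]) (use le in \<open>auto simp: Q_def\<close>)
  then have "6 * (real m * (real m - 1) * Q i0 j0) \<le> real m * (real m ^ 4 - real m ^ 2)"
    using tot2 TT_card unfolding Q_def by simp
  moreover have "real m * (real m ^ 4 - real m ^ 2) = (real m * (real m - 1)) * (real m ^ 2 * (real m + 1))"
    by (simp add: algebra_simps power2_eq_square power4_eq_xxxx)
  moreover have "(real m * (real m - 1)) * (6 * Q i0 j0) = 6 * (real m * (real m - 1) * Q i0 j0)" by simp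
  ultimately have "(real m * (real m - 1)) * (6 * Q i0 j0) \<le> (real m * (real m - 1)) * (real m ^ 2 * (real m + 1))"
    by linarith
  moreover have "0 < real m * (real m - 1)" using m3 by simp
  ultimately have b: "6 * Q i0 j0 \<le> real m ^ 2 * (real m + 1)" by (rule mult_le_cancel_left_pos[THEN iffD1, rotated])
  define N where "N = (\<Sum>k<m. ((X i0 k - X j0 k) + (X j0 k - X i0 k))^2)"
  have QN: "Q i0 j0 = real N" unfolding Q_def N_def by (simp only: of_nat_sum of_nat_power nd power2_abs)
  have "real (6 * N) \<le> real (m^2 * (m + 1))" using b QN by (simp add: algebra_simps)
  then have "6 * N \<le> m^2 * (m + 1)" by linarith
  then have "N \<le> (m^2 * (m + 1)) div 6" by (simp add: less_eq_div_iff_mult_less_eq mult.commute)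
  then have "real N \<le> real ((m^2 * (m + 1)) div 6)" by simp
  then show ?thesis using ij(3) gQ QN by simp
qed

end

theorem lemma5:
  fixes m :: nat and X S :: "nat \<Rightarrow> nat \<Rightarrow> nat"
  assumes "m \<ge> 3"
    and "marginally_coupled m X S"
    and "d_H (2*m) m S \<ge> m - 2"
    and "real (num_pairs_at_dist (2*m) m S (m - 2)) < real m ^ 2 / 2"
  shows "d_q 1 (2*m) m X \<le> real (((m + 1) * m) div 3) \<and>
         d_q 2 (2*m) m X \<le> sqrt (real ((m^2 * (m + 1)) div 6))"
proof -
  interpret mcl m X S using assms by unfold_locales
  show ?thesis using main1 main2 by simp
qed

end
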